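(* Let $\mathtt{p}$ be a CF program that terminates on every input and that does not have call overlap. Then $\mathtt{p}$ is in CFpoly, i.e., there is a polynomial $\pi$ with $\mathit{time}_{\mathtt{p}}(x)\le\pi(|x|)$ for all $x\in\{0,1\}^*$.
   Context: CF ("cons-free") is a first-order, call-by-value functional language over booleans and bit lists $\{0,1\}^*$. A program is a finite sequence of mutually recursive function definitions $\mathtt{f\ x1 \dots xm = e}$ ($m\ge0$), the first being a one-argument entry function. Expressions are $\mathtt{True}$, $\mathtt{False}$, $\mathtt{[]}$, variables, base calls $\mathtt{not\ e}$, $\mathtt{null\ e}$, $\mathtt{head\ e}$, $\mathtt{tail\ e}$, conditionals $\mathtt{if\ e_0\ then\ e_1\ else\ e_2}$, and calls $\mathtt{f\ e_1\dots e_m}$ of defined functions; there are no list constructors. Semantics is standard big-step call-by-value evaluation given by inference rules deriving $\mathtt{p},\rho\vdash\mathtt{e}\to v$; the derivation tree for the run on input $x$ is the computation tree $\mathcal{T}^{\mathtt{p},x}$, and the native running time $\mathit{time}_{\mathtt{p}}(x)$ is the number of nodes of $\mathcal{T}^{\mathtt{p},x}$. A CF program has call overlap if, on some input, it calls the same defined function more than once with the same tuple of argument values. CFpoly is the class of CF programs that terminate in polynomial (native) time. *)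

theory Defs
  imports "HOL-Computational_Algebra.Polynomial"
begin

text \<open>Values: booleans and bit lists (bit 0 = False, bit 1 = True).\<close>
datatype val = VBool bool | VList "bool list"

text \<open>Expressions. Variables are referenced by their position (de Bruijn-style index)
  among the parameters of the enclosing function; defined functions are referenced by
  their position in the program.\<close>
datatype expr =
    ETrue | EFalse | ENil
  | EVar nat
  | ENot expr | ENull expr | EHead expr | ETail expr
  | EIf expr expr expr
  | ECall nat "expr list"

text \<open>A program is a list of definitions (arity m, body); the first is the entry.\<close>
type_synonym program = "(nat \<times> expr) list"

fun wf_expr :: "program \<Rightarrow> nat \<Rightarrow> expr \<Rightarrow> bool" where
  "wf_expr p m ETrue = True"
| "wf_expr p m EFalse = True"
| "wf_expr p m ENil = True"
| "wf_expr p m (EVar i) = (i < m)"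
| "wf_expr p m (ENot e) = wf_expr p m e"
| "wf_expr p m (ENull e) = wf_expr p m e"
| "wf_expr p m (EHead e) = wf_expr p m e"
| "wf_expr p m (ETail e) = wf_expr p m e"
| "wf_expr p m (EIf e0 e1 e2) = (wf_expr p m e0 \<and> wf_expr p m e1 \<and> wf_expr p m e2)"
| "wf_expr p m (ECall f es) =
     (f < length p \<and> length es = fst (p ! f) \<and> (\<forall>e \<in> set es. wf_expr p m e))"

definition wf_program :: "program \<Rightarrow> bool" where
  "wf_program p \<longleftrightarrow> p \<noteq> [] \<and> fst (p ! 0) = 1 \<and>
     (\<forall>d \<in> set p. wf_expr p (fst d) (snd d))"

text \<open>A derivation tree node is labelled with Some (f, args) if it is an
  instance of the rule for a call of the defined function f with argument values args,
  and with None otherwise.\<close>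
datatype dtree = Node "(nat \<times> val list) option" "dtree list"

fun nodes :: "dtree \<Rightarrow> nat" where
  "nodes (Node l ts) = Suc (sum_list (map nodes ts))"

fun calls :: "dtree \<Rightarrow> (nat \<times> val list) list" where
  "calls (Node l ts) = (case l of Some c \<Rightarrow> [c] | None \<Rightarrow> []) @ concat (map calls ts)"

inductive eval :: "program \<Rightarrow> val list \<Rightarrow> expr \<Rightarrow> val \<Rightarrow> dtree \<Rightarrow> bool" where
  ev_true: "eval p rho ETrue (VBool True) (Node None [])"
| ev_false: "eval p rho EFalse (VBool False) (Node None [])"
| ev_nil: "eval p rho ENil (VList []) (Node None [])"
| ev_var: "i < length rho \<Longrightarrow> eval p rho (EVar i) (rho ! i) (Node None [])"
| ev_not: "eval p rho e (VBool b) t \<Longrightarrow> eval p rho (ENot e) (VBool (\<not> b)) (Node None [t])"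
| ev_null: "eval p rho e (VList xs) t \<Longrightarrow> eval p rho (ENull e) (VBool (xs = [])) (Node None [t])"
| ev_head: "eval p rho e (VList (b # xs)) t \<Longrightarrow> eval p rho (EHead e) (VBool b) (Node None [t])"
| ev_tail: "eval p rho e (VList (b # xs)) t \<Longrightarrow> eval p rho (ETail e) (VList xs) (Node None [t])"
| ev_if_true: "eval p rho e0 (VBool True) t0 \<Longrightarrow> eval p rho e1 v t1 \<Longrightarrow>
     eval p rho (EIf e0 e1 e2) v (Node None [t0, t1])"
| ev_if_false: "eval p rho e0 (VBool False) t0 \<Longrightarrow> eval p rho e2 v t2 \<Longrightarrow>
     eval p rho (EIf e0 e1 e2) v (Node None [t0, t2])"
| ev_call: "list_all2 (\<lambda>e vt. eval p rho e (fst vt) (snd vt)) es vts \<Longrightarrow>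
     f < length p \<Longrightarrow> length vts = fst (p ! f) \<Longrightarrow>
     eval p (map fst vts) (snd (p ! f)) v tb \<Longrightarrow>
     eval p rho (ECall f es) v (Node (Some (f, map fst vts)) (map snd vts @ [tb]))"

definition run :: "program \<Rightarrow> bool list \<Rightarrow> val \<Rightarrow> dtree \<Rightarrow> bool" where
  "run p x v t \<longleftrightarrow> eval p [VList x] (ECall 0 [EVar 0]) v t"

definition terminates_everywhere :: "program \<Rightarrow> bool" where
  "terminates_everywhere p \<longleftrightarrow> (\<forall>x. \<exists>v t. run p x v t)"

definition has_call_overlap :: "program \<Rightarrow> bool" where
  "has_call_overlap p \<longleftrightarrow> (\<exists>x v t. run p x v t \<and> \<not> distinct (calls t))"

text \<open>CFpoly: p terminates in polynomial native time (number of nodes of the computation tree).\<close>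
definition in_CFpoly :: "program \<Rightarrow> bool" where
  "in_CFpoly p \<longleftrightarrow> (\<exists>q :: nat poly. \<forall>x v t. run p x v t \<longrightarrow> nodes t \<le> poly q (length x))"

end

theory Submission
  imports Defs
begin

fun esize :: "expr \<Rightarrow> nat" where
  "esize ETrue = 1"
| "esize EFalse = 1"
| "esize ENil = 1"
| "esize (EVar i) = 1"
| "esize (ENot e) = Suc (esize e)"
| "esize (ENull e) = Suc (esize e)"
| "esize (EHead e) = Suc (esize e)"
| "esize (ETail e) = Suc (esize e)"
| "esize (EIf a b c) = Suc (esize a + esize b + esize c)"
| "esize (ECall f es) = Suc (sum_list (map esize es))"

definition K :: "program \<Rightarrow> nat" where
  "K p = sum_list (map (esize \<circ> snd) p)"

lemma body_le_K: "f < length p \<Longrightarrow> esize (snd (p ! f)) \<le> K p"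
proof -
  assume "f < length p"
  then have "(esize \<circ> snd) (p ! f) \<in> set (map (esize \<circ> snd) p)" by auto
  then show ?thesis unfolding K_def using member_le_sum_list by fastforce
qed

lemma sum_helper:
  fixes a h :: "'b \<Rightarrow> nat" and g :: "'a \<Rightarrow> nat"
  assumes "list_all2 (\<lambda>e vt. a vt \<le> g e + k * h vt) es vts"
  shows "sum_list (map a vts) \<le> sum_list (map g es) + k * sum_list (map h vts)"
  using assms
  by (induct rule: list_all2_induct) (auto simp: algebra_simps)

lemma nodes_bound:
  "eval p rho e v t \<Longrightarrow> nodes t \<le> esize e + K p * length (calls t)"
proof (induction rule: eval.induct)
  case (ev_call p rho es vts f v tb)
  have A: "list_all2 (\<lambda>e vt. nodes (snd vt) \<le> esize e + K p * length (calls (snd vt))) es vts"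
    using ev_call.IH(1) by (rule list_all2_mono) auto
  have B: "sum_list (map (nodes \<circ> snd) vts) \<le> sum_list (map esize es) + K p * sum_list (map (length \<circ> calls \<circ> snd) vts)"
    using sum_helper[OF A] by (simp add: comp_def)
  have C: "esize (snd (p ! f)) \<le> K p" using body_le_K \<open>f < length p\<close> .
  have "nodes (Node (Some (f, map fst vts)) (map snd vts @ [tb]))
      = Suc (sum_list (map (nodes \<circ> snd) vts) + nodes tb)" by simp
  moreover have "length (calls (Node (Some (f, map fst vts)) (map snd vts @ [tb])))
      = Suc (sum_list (map (length \<circ> calls \<circ> snd) vts) + length (calls tb))"
    by (simp add: length_concat comp_def)
  ultimately show ?case using B C ev_call.IH(2)
    by (simp add: algebra_simps) 
qed (auto simp: algebra_simps)

definition V :: "bool list \<Rightarrow> val set" where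
  "V x = range VBool \<union> (\<lambda>k. VList (drop k x)) ` {..length x}"

definition Ma :: "program \<Rightarrow> nat" where
  "Ma p = sum_list (map fst p)"

lemma ar_le_Ma: "f < length p \<Longrightarrow> fst (p ! f) \<le> Ma p"
proof -
  assume "f < length p"
  then have "fst (p ! f) \<in> set (map fst p)" by auto
  then show ?thesis unfolding Ma_def using member_le_sum_list by fastforce
qed

definition okc :: "program \<Rightarrow> bool list \<Rightarrow> nat \<times> val list \<Rightarrow> bool" where
  "okc p x c \<longleftrightarrow> fst c < length p \<and> set (snd c) \<subseteq> V x \<and> length (snd c) \<le> Ma p"

lemma tail_V: "VList (b # xs) \<in> V x \<Longrightarrow> VList xs \<in> V x"
proof -
  assume "VList (b # xs) \<in> V x"
  then obtain k where k: "k \<le> length x" "drop k x = b # xs" unfolding V_def by auto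
  then have "drop (Suc k) x = xs" by (metis drop_Suc list.sel(3) tl_drop)
  moreover have "Suc k \<le> length x" using k
    by (metis Suc_leI drop_all leI list.distinct(1) nat_less_le)
  ultimately show ?thesis unfolding V_def by (auto intro!: image_eqI[where x="Suc k"])
qed

lemma nil_V: "VList [] \<in> V x"
  unfolding V_def by (auto intro!: image_eqI[where x="length x"])

lemma bool_V: "VBool b \<in> V x"
  unfolding V_def by auto

lemma vals_inv:
  "eval p rho e v t \<Longrightarrow> set rho \<subseteq> V x \<longrightarrow> v \<in> V x \<and> (\<forall>c\<in>set (calls t). okc p x c)"
proof (induction rule: eval.induct)
  case (ev_call p rho es vts f v tb)
  show ?case
  proof
    assume r: "set rho \<subseteq> V x"
    have A: "list_all2 (\<lambda>e vt. fst vt \<in> V x \<and> (\<forall>c\<in>set (calls (snd vt)). okc p x c)) es vts"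
      using ev_call.IH(1) by (rule list_all2_mono) (use r in auto)
    have "\<forall>vt\<in>set vts. fst vt \<in> V x \<and> (\<forall>c\<in>set (calls (snd vt)). okc p x c)"
      using A by (metis (no_types, lifting) in_set_conv_nth list_all2_conv_all_nth)
    then show "v \<in> V x \<and> (\<forall>c\<in>set (calls (Node (Some (f, map fst vts)) (map snd vts @ [tb]))). okc p x c)"
      using ev_call.IH(2) \<open>f < length p\<close> ar_le_Ma[of f p] \<open>length vts = fst (p ! f)\<close> by (auto simp: okc_def)
  qed
qed (auto simp: nil_V bool_V intro: tail_V)



lemma card_V: "card (V x) \<le> length x + 3"
proof -
  have "range VBool = {VBool True, VBool False}" by auto
  then have a: "card (range VBool) \<le> 2" by simp
  have b: "card ((\<lambda>k. VList (drop k x)) ` {..length x}) \<le> length x + 1"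
    using card_image_le[of "{..length x}" "\<lambda>k. VList (drop k x)"] by simp
  have "card (V x) \<le> card (range VBool) + card ((\<lambda>k. VList (drop k x)) ` {..length x})"
    unfolding V_def by (rule card_Un_le)
  then show ?thesis using a b by simp
qed

lemma finite_V: "finite (V x)"
proof -
  have "range VBool = {VBool True, VBool False}" by auto
  then show ?thesis unfolding V_def by simp
qed

theorem lemma6:
  assumes "wf_program p"
    and "terminates_everywhere p"
    and "\<not> has_call_overlap p"
  shows "in_CFpoly p"
proof -
  define q :: "nat poly" where
    "q = [:2:] + smult (K p * length p) (\<Sum>i\<le>Ma p. [:3,1:] ^ i)"
  have pq: "poly q n = 2 + K p * length p * (\<Sum>i\<le>Ma p. (n + 3) ^ i)" for n
    unfolding q_def by (simp add: poly_sum algebra_simps)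
  show ?thesis unfolding in_CFpoly_def
  proof (intro exI allI impI)
    fix x v t assume r: "run p x v t"
    then have ev: "eval p [VList x] (ECall 0 [EVar 0]) v t" unfolding run_def .
    have d: "distinct (calls t)" using assms(3) r unfolding has_call_overlap_def by blast
    have n1: "nodes t \<le> 2 + K p * length (calls t)"
      using nodes_bound[OF ev] by simp
    have xV: "VList x \<in> V x" unfolding V_def by (auto intro!: image_eqI[where x=0])
    have ok: "\<forall>c\<in>set (calls t). okc p x c" using vals_inv[OF ev, of x] xV by simp
    define S where "S = {0..<length p} \<times> {vs. set vs \<subseteq> V x \<and> length vs \<le> Ma p}"
    have sub: "set (calls t) \<subseteq> S" using ok unfolding S_def okc_def by fastforce
    have finS: "finite S" unfolding S_def
      using finite_lists_length_le[OF finite_V, of x "Ma p"] by simp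
    have cS: "card S = length p * (\<Sum>i\<le>Ma p. card (V x) ^ i)"
      unfolding S_def by (simp add: card_cartesian_product card_lists_length_le[OF finite_V])
    have "(\<Sum>i\<le>Ma p. card (V x) ^ i) \<le> (\<Sum>i\<le>Ma p. (length x + 3) ^ i)"
      by (rule sum_mono) (simp add: power_mono card_V)
    then have "card S \<le> length p * (\<Sum>i\<le>Ma p. (length x + 3) ^ i)" using cS by simp
    moreover have "length (calls t) \<le> card S"
      using distinct_card[OF d] card_mono[OF finS sub] by simp
    ultimately have "length (calls t) \<le> length p * (\<Sum>i\<le>Ma p. (length x + 3) ^ i)" by linarith
    then have "K p * length (calls t) \<le> K p * length p * (\<Sum>i\<le>Ma p. (length x + 3) ^ i)"
      by (metis mult.assoc mult_le_mono2)
    then show "nodes t \<le> poly q (length x)" using n1 pq[of "length x"] by linarith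
  qed
qed

end
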